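(* Let $\widehat B\in\mathbb R^K$ be fixed and define, for $\widehat U=(\widehat h,\widehat{q^x},\widehat{q^y})\in\mathbb R^{3K}$ with $\mathcal P(\widehat h)$ invertible, $$E(\widehat U)=\tfrac12\big((\widehat{q^x})^\top\widehat u+(\widehat{q^y})^\top\widehat v\big)+\tfrac12 g\|\widehat h\|^2+g\,\widehat h^\top\widehat B,\qquad \widehat u=\mathcal P^{-1}(\widehat h)\widehat{q^x},\ \widehat v=\mathcal P^{-1}(\widehat h)\widehat{q^y}.$$ If $\mathcal P(\widehat h)$ is positive definite, then $E$ is convex in $\widehat U$.
   Context: Let $\xi$ be a random variable in $\mathbb R^d$ with density $\rho$ having finite moments of all orders, and let $\phi_1\equiv1,\phi_2,\dots,\phi_K$ be polynomials orthonormal in $L^2_\rho$. For $k=1,\dots,K$ let $\mathcal M_k\in\mathbb R^{K\times K}$ with $(\mathcal M_k)_{l,m}=\int\phi_k\phi_l\phi_m\rho$, and for $\widehat z\in\mathbb R^K$ set $\mathcal P(\widehat z)=\sum_{k=1}^K\widehat z_k\mathcal M_k$. $g>0$ is a constant. Convexity is understood on the (convex) set of $\widehat U$ with $\mathcal P(\widehat h)$ positive definite. *)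

theory Defs
  imports "HOL-Analysis.Analysis"
begin

definition poly_fun :: "(real^'d \<Rightarrow> real) \<Rightarrow> bool" where
  "poly_fun p \<longleftrightarrow> (\<exists>(A :: ('d \<Rightarrow> nat) set) c. finite A \<and>
      (\<forall>x. p x = (\<Sum>\<alpha>\<in>A. c \<alpha> * (\<Prod>i\<in>UNIV. (x $ i) ^ \<alpha> i))))"

definition density_all_moments :: "(real^'d \<Rightarrow> real) \<Rightarrow> bool" where
  "density_all_moments \<rho> \<longleftrightarrow> \<rho> \<in> borel_measurable lborel \<and> (\<forall>x. 0 \<le> \<rho> x)
     \<and> integral\<^sup>L lborel \<rho> = 1
     \<and> (\<forall>n::nat. integrable lborel (\<lambda>x. \<rho> x * norm x ^ n))"

definition Mmat :: "('k \<Rightarrow> real^'d \<Rightarrow> real) \<Rightarrow> (real^'d \<Rightarrow> real) \<Rightarrow> 'k \<Rightarrow> real^'k^'k" where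
  "Mmat \<phi> \<rho> k = (\<chi> l m. integral\<^sup>L lborel (\<lambda>x. \<phi> k x * \<phi> l x * \<phi> m x * \<rho> x))"

definition Pmat :: "('k::finite \<Rightarrow> real^'d \<Rightarrow> real) \<Rightarrow> (real^'d \<Rightarrow> real) \<Rightarrow> real^'k \<Rightarrow> real^'k^'k" where
  "Pmat \<phi> \<rho> z = (\<Sum>k\<in>UNIV. z $ k *\<^sub>R Mmat \<phi> \<rho> k)"

definition pos_def_mat :: "real^'k^'k \<Rightarrow> bool" where
  "pos_def_mat A \<longleftrightarrow> transpose A = A \<and> (\<forall>x. x \<noteq> 0 \<longrightarrow> 0 < x \<bullet> (A *v x))"

definition energy :: "('k::finite \<Rightarrow> real^'d \<Rightarrow> real) \<Rightarrow> (real^'d \<Rightarrow> real) \<Rightarrow> real \<Rightarrow> real^'k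
    \<Rightarrow> (real^'k) \<times> (real^'k) \<times> (real^'k) \<Rightarrow> real" where
  "energy \<phi> \<rho> g B U = (case U of (h, qx, qy) \<Rightarrow>
     (let u = matrix_inv (Pmat \<phi> \<rho> h) *v qx; v = matrix_inv (Pmat \<phi> \<rho> h) *v qy
      in (1/2) * (qx \<bullet> u + qy \<bullet> v) + (1/2) * g * (norm h)\<^sup>2 + g * (h \<bullet> B)))"

end

theory Submission
  imports Defs
begin

lemma pd_right_inv:
  fixes A :: "real^'k::finite^'k"
  assumes "pos_def_mat A"
  shows "A ** matrix_inv A = mat 1"
proof -
  have "\<forall>x. A *v x = 0 \<longrightarrow> x = 0"
  proof (intro allI impI, rule ccontr)
    fix x assume "A *v x = 0" "x \<noteq> 0"
    then show False using assms unfolding pos_def_mat_def by force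
  qed
  then have "invertible A"
    using invertible_left_inverse matrix_left_invertible_ker by blast
  then have "\<exists>A'. A ** A' = mat 1 \<and> A' ** A = mat 1" by (simp add: invertible_def)
  then show ?thesis unfolding matrix_inv_def by (metis (mono_tags, lifting) someI_ex)
qed

lemma pd_inv_vec:
  fixes A :: "real^'k::finite^'k"
  assumes "pos_def_mat A"
  shows "A *v (matrix_inv A *v q) = q"
  by (simp add: matrix_vector_mul_assoc pd_right_inv[OF assms])

lemma sym_inner:
  fixes A :: "real^'k::finite^'k"
  assumes "transpose A = A"
  shows "x \<bullet> (A *v y) = y \<bullet> (A *v x)"
proof -
  have "x \<bullet> (A *v y) = (x v* A) \<bullet> y" by (simp add: dot_lmul_matrix)
  also have "x v* A = transpose A *v x" by simp
  also have "\<dots> = A *v x" using assms by simp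
  finally show ?thesis by (simp add: inner_commute)
qed

lemma pd_bound:
  fixes A :: "real^'k::finite^'k"
  assumes "pos_def_mat A"
  shows "2 * (x \<bullet> q) - x \<bullet> (A *v x) \<le> q \<bullet> (matrix_inv A *v q)"
proof -
  define y where "y = matrix_inv A *v q"
  have q: "q = A *v y" using pd_inv_vec[OF assms] y_def by simp
  have sym: "transpose A = A" using assms pos_def_mat_def by blast
  have "0 \<le> (x - y) \<bullet> (A *v (x - y))"
    using assms unfolding pos_def_mat_def
    by (cases "x - y = 0") (auto intro: less_imp_le)
  also have "\<dots> = x \<bullet> (A *v x) - x \<bullet> (A *v y) - y \<bullet> (A *v x) + y \<bullet> (A *v y)"
    by (simp add: matrix_vector_mult_diff_distrib inner_diff_left inner_diff_right)
  also have "\<dots> = x \<bullet> (A *v x) - 2 * (x \<bullet> q) + q \<bullet> y"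
    using sym_inner[OF sym, of y x] q by (simp add: inner_commute)
  finally show ?thesis using y_def by simp
qed

lemma pd_eq:
  fixes A :: "real^'k::finite^'k"
  assumes "pos_def_mat A"
  shows "q \<bullet> (matrix_inv A *v q) = 2 * ((matrix_inv A *v q) \<bullet> q)
     - (matrix_inv A *v q) \<bullet> (A *v (matrix_inv A *v q))"
  using pd_inv_vec[OF assms] by (simp add: inner_commute)

lemma frac_convex:
  fixes A1 A2 :: "real^'k::finite^'k"
  assumes "pos_def_mat A1" "pos_def_mat A2" "pos_def_mat (u *\<^sub>R A1 + v *\<^sub>R A2)"
    and "u \<ge> 0" "v \<ge> 0"
  shows "(u *\<^sub>R q1 + v *\<^sub>R q2) \<bullet> (matrix_inv (u *\<^sub>R A1 + v *\<^sub>R A2) *v (u *\<^sub>R q1 + v *\<^sub>R q2))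
     \<le> u * (q1 \<bullet> (matrix_inv A1 *v q1)) + v * (q2 \<bullet> (matrix_inv A2 *v q2))"
proof -
  define x where "x = matrix_inv (u *\<^sub>R A1 + v *\<^sub>R A2) *v (u *\<^sub>R q1 + v *\<^sub>R q2)"
  have "(u *\<^sub>R q1 + v *\<^sub>R q2) \<bullet> x = 2 * (x \<bullet> (u *\<^sub>R q1 + v *\<^sub>R q2)) - x \<bullet> ((u *\<^sub>R A1 + v *\<^sub>R A2) *v x)"
    using pd_eq[OF assms(3)] x_def by simp
  also have "\<dots> = u * (2 * (x \<bullet> q1) - x \<bullet> (A1 *v x)) + v * (2 * (x \<bullet> q2) - x \<bullet> (A2 *v x))"
    by (simp add: matrix_vector_mult_add_rdistrib inner_add_left inner_add_right
        flip: scaleR_matrix_vector_assoc) (simp add: algebra_simps)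
  also have "\<dots> \<le> u * (q1 \<bullet> (matrix_inv A1 *v q1)) + v * (q2 \<bullet> (matrix_inv A2 *v q2))"
    using pd_bound[OF assms(1), of x q1] pd_bound[OF assms(2), of x q2] assms(4,5)
    by (intro add_mono mult_left_mono) auto
  finally show ?thesis using x_def by simp
qed

lemma Pmat_lin:
  "Pmat \<phi> \<rho> (u *\<^sub>R h1 + v *\<^sub>R h2) = u *\<^sub>R Pmat \<phi> \<rho> h1 + v *\<^sub>R Pmat \<phi> \<rho> h2"
  unfolding Pmat_def
  by (simp add: scaleR_add_left sum.distrib scaleR_sum_right)

lemma transpose_add': "transpose (A + B) = transpose A + transpose (B :: real^'n^'m)"
  by (simp add: transpose_def vec_eq_iff)

lemma pd_comb:
  fixes A1 A2 :: "real^'k::finite^'k"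
  assumes "pos_def_mat A1" "pos_def_mat A2" "u \<ge> 0" "v \<ge> 0" "u + v = 1"
  shows "pos_def_mat (u *\<^sub>R A1 + v *\<^sub>R A2)"
  unfolding pos_def_mat_def
proof (intro conjI allI impI)
  show "transpose (u *\<^sub>R A1 + v *\<^sub>R A2) = u *\<^sub>R A1 + v *\<^sub>R A2"
    using assms(1,2) by (simp add: transpose_add' transpose_scalar pos_def_mat_def)
  fix x :: "real^'k" assume "x \<noteq> 0"
  then have p1: "0 < x \<bullet> (A1 *v x)" and p2: "0 < x \<bullet> (A2 *v x)"
    using assms(1,2) pos_def_mat_def by auto
  have "x \<bullet> ((u *\<^sub>R A1 + v *\<^sub>R A2) *v x) = u * (x \<bullet> (A1 *v x)) + v * (x \<bullet> (A2 *v x))"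
    by (simp add: matrix_vector_mult_add_rdistrib inner_add_right flip: scaleR_matrix_vector_assoc)
  also have "\<dots> > 0"
  proof (cases "u = 0")
    case True then show ?thesis using assms p2 by simp
  next
    case False then show ?thesis using assms p1 p2
      by (simp add: add_pos_nonneg)
  qed
  finally show "0 < x \<bullet> ((u *\<^sub>R A1 + v *\<^sub>R A2) *v x)" .
qed

lemma norm_sq_convex:
  fixes a b :: "'a::real_normed_vector"
  assumes "u \<ge> 0" "v \<ge> 0" "u + v = 1"
  shows "(norm (u *\<^sub>R a + v *\<^sub>R b))\<^sup>2 \<le> u * (norm a)\<^sup>2 + v * (norm b)\<^sup>2"
proof -
  have "norm (u *\<^sub>R a + v *\<^sub>R b) \<le> u * norm a + v * norm b"
    using assms by (metis abs_of_nonneg norm_scaleR norm_triangle_ineq)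
  then have "(norm (u *\<^sub>R a + v *\<^sub>R b))\<^sup>2 \<le> (u * norm a + v * norm b)\<^sup>2"
    by (simp add: power_mono)
  also have "\<dots> = u * (norm a)\<^sup>2 + v * (norm b)\<^sup>2 - u * v * (norm a - norm b)\<^sup>2"
    using assms(3) by (simp add: power2_eq_square eq_diff_eq[symmetric]) (simp add: algebra_simps)
  also have "\<dots> \<le> u * (norm a)\<^sup>2 + v * (norm b)\<^sup>2"
    using assms by simp
  finally show ?thesis .
qed

theorem lemma3p2:
  fixes \<rho> :: "real^'d \<Rightarrow> real"
    and \<phi> :: "'k::finite \<Rightarrow> real^'d \<Rightarrow> real"
    and k1 :: 'k
    and g :: real
    and B :: "real^'k"
  assumes dens: "density_all_moments \<rho>"
    and poly: "\<And>k. poly_fun (\<phi> k)"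
    and one: "\<phi> k1 = (\<lambda>_. 1)"
    and orth: "\<And>l m. integral\<^sup>L lborel (\<lambda>x. \<phi> l x * \<phi> m x * \<rho> x) = (if l = m then 1 else 0)"
    and g: "g > 0"
  shows "convex_on {(h, qx, qy). pos_def_mat (Pmat \<phi> \<rho> h)} (energy \<phi> \<rho> g B)"
  unfolding convex_on_def
proof (intro conjI ballI allI impI)
  let ?S = "{(h, qx, qy). pos_def_mat (Pmat \<phi> \<rho> h)}"
  show "convex ?S"
    unfolding convex_def
    by (auto simp: Pmat_lin intro!: pd_comb)
  fix z1 z2 :: "(real^'k) \<times> (real^'k) \<times> (real^'k)" and u v :: real
  assume z1: "z1 \<in> ?S" and z2: "z2 \<in> ?S" and u: "0 \<le> u" and v: "0 \<le> v" and uv: "u + v = 1"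
  obtain h1 a1 b1 where e1: "z1 = (h1, a1, b1)" by (cases z1) auto
  obtain h2 a2 b2 where e2: "z2 = (h2, a2, b2)" by (cases z2) auto
  have P1: "pos_def_mat (Pmat \<phi> \<rho> h1)" using z1 e1 by simp
  have P2: "pos_def_mat (Pmat \<phi> \<rho> h2)" using z2 e2 by simp
  have P: "pos_def_mat (u *\<^sub>R Pmat \<phi> \<rho> h1 + v *\<^sub>R Pmat \<phi> \<rho> h2)"
    using pd_comb[OF P1 P2 u v uv] .
  note fa = frac_convex[OF P1 P2 P u v, of a1 a2]
  note fb = frac_convex[OF P1 P2 P u v, of b1 b2]
  have nn: "(1/2) * g * (norm (u *\<^sub>R h1 + v *\<^sub>R h2))\<^sup>2 \<le>
      u * ((1/2) * g * (norm h1)\<^sup>2) + v * ((1/2) * g * (norm h2)\<^sup>2)"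
    using mult_left_mono[OF norm_sq_convex[OF u v uv, of h1 h2], of "(1/2) * g"] g
    by (simp add: algebra_simps)
  have ll: "g * ((u *\<^sub>R h1 + v *\<^sub>R h2) \<bullet> B) = u * (g * (h1 \<bullet> B)) + v * (g * (h2 \<bullet> B))"
    by (simp add: inner_add_left algebra_simps)
  show "energy \<phi> \<rho> g B (u *\<^sub>R z1 + v *\<^sub>R z2) \<le> u * energy \<phi> \<rho> g B z1 + v * energy \<phi> \<rho> g B z2"
  proof -
    let ?A = "u *\<^sub>R Pmat \<phi> \<rho> h1 + v *\<^sub>R Pmat \<phi> \<rho> h2"
    have E: "energy \<phi> \<rho> g B (u *\<^sub>R z1 + v *\<^sub>R z2) =
      (1/2) * ((u *\<^sub>R a1 + v *\<^sub>R a2) \<bullet> (matrix_inv ?A *v (u *\<^sub>R a1 + v *\<^sub>R a2))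
             + (u *\<^sub>R b1 + v *\<^sub>R b2) \<bullet> (matrix_inv ?A *v (u *\<^sub>R b1 + v *\<^sub>R b2)))
      + (1/2) * g * (norm (u *\<^sub>R h1 + v *\<^sub>R h2))\<^sup>2 + g * ((u *\<^sub>R h1 + v *\<^sub>R h2) \<bullet> B)"
      unfolding e1 e2 energy_def by (simp only: Pmat_lin Let_def scaleR_Pair add_Pair prod.simps)
    have E1: "energy \<phi> \<rho> g B z1 = (1/2) * (a1 \<bullet> (matrix_inv (Pmat \<phi> \<rho> h1) *v a1)
       + b1 \<bullet> (matrix_inv (Pmat \<phi> \<rho> h1) *v b1)) + (1/2) * g * (norm h1)\<^sup>2 + g * (h1 \<bullet> B)"
      unfolding e1 energy_def by (simp only: Let_def prod.simps)
    have E2: "energy \<phi> \<rho> g B z2 = (1/2) * (a2 \<bullet> (matrix_inv (Pmat \<phi> \<rho> h2) *v a2)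
       + b2 \<bullet> (matrix_inv (Pmat \<phi> \<rho> h2) *v b2)) + (1/2) * g * (norm h2)\<^sup>2 + g * (h2 \<bullet> B)"
      unfolding e2 energy_def by (simp only: Let_def prod.simps)
    show ?thesis unfolding E E1 E2 using fa fb nn ll by (simp add: algebra_simps)
  qed
qed

end
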